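(* Let $d\ge2$, let $\Omega\subset\mathbb R^d$ be a nonempty bounded open convex polytope, and suppose $\mathfrak E=\{e_1,\dots,e_p\}\subset\mathbb R^d$ is weakly incoming to $\Omega$. Then there exist $r>0$ and $\epsilon\in]0,1]$ such that for every $x_0\in\overline\Omega$ there exist $q\in\{1,\dots,p\}$ and $\theta_q\in\{\pm1\}$ with $$x+t\theta_qe_q\in\Omega\qquad\text{for all }x\in B(x_0,r)\cap\Omega\text{ and all }t\in[0,\epsilon].$$
   Context: $\Omega=\{x\in\mathbb R^d:\ \ell_j(x)>b_j,\ j=1,\dots,m\}$ for linear forms $\ell_j$ and reals $b_j$. Define $\mathrm c:\mathbb R^d\to\mathbb N\cup\{+\infty\}$ by $\mathrm c(x)=0$ if $x\in\Omega$, $+\infty$ if $x\notin\overline\Omega$, $\#\{i:\ell_i(x)=b_i\}$ if $x\in\partial\Omega$. $\mathfrak E$ is weakly incoming to $\Omega$ if for every $x_0\in\partial\Omega$ there exist $\epsilon>0$, $\theta\in\{\pm1\}$, $e\in\mathfrak E$ with $\mathrm c(x_0+\theta te)<\mathrm c(x_0)$ for all $t\in]0,\epsilon]$. $B(x_0,r)$ is the open ball of radius $r$ about $x_0$. *)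

theory Defs
  imports "HOL-Analysis.Analysis" "HOL-Library.Extended_Nat"
begin

definition poly_set :: "(nat \<Rightarrow> 'a::euclidean_space \<Rightarrow> real) \<Rightarrow> (nat \<Rightarrow> real) \<Rightarrow> nat \<Rightarrow> 'a set" where
  "poly_set l b m = {x. \<forall>j\<in>{1..m}. b j < l j x}"

definition cnt :: "(nat \<Rightarrow> 'a::euclidean_space \<Rightarrow> real) \<Rightarrow> (nat \<Rightarrow> real) \<Rightarrow> nat \<Rightarrow> 'a \<Rightarrow> enat" where
  "cnt l b m x =
     (if x \<in> poly_set l b m then 0
      else if x \<notin> closure (poly_set l b m) then \<infinity>
      else enat (card {i\<in>{1..m}. l i x = b i}))"

definition weakly_incoming :: "'a set \<Rightarrow> (nat \<Rightarrow> 'a::euclidean_space \<Rightarrow> real) \<Rightarrow> (nat \<Rightarrow> real) \<Rightarrow> nat \<Rightarrow> bool" where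
  "weakly_incoming E l b m \<longleftrightarrow>
     (\<forall>x0\<in>frontier (poly_set l b m). \<exists>\<epsilon>>0. \<exists>\<theta>\<in>{-1, 1::real}. \<exists>e\<in>E.
        \<forall>t\<in>{0<..\<epsilon>}. cnt l b m (x0 + (\<theta> * t) *\<^sub>R e) < cnt l b m x0)"

end

theory Submission
  imports Defs
begin

lemma lin_bl: "linear (f::'a::euclidean_space \<Rightarrow> real) \<Longrightarrow> bounded_linear f"
  using linear_conv_bounded_linear by blast

theorem corollary1p4:
  fixes l :: "nat \<Rightarrow> 'a::euclidean_space \<Rightarrow> real" and b :: "nat \<Rightarrow> real"
    and m p :: nat and e :: "nat \<Rightarrow> 'a"
  assumes "DIM('a) \<ge> 2"
    and "\<forall>j\<in>{1..m}. linear (l j)"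
    and "poly_set l b m \<noteq> {}"
    and "bounded (poly_set l b m)"
    and "weakly_incoming (e ` {1..p}) l b m"
  shows "\<exists>r>0. \<exists>\<epsilon>>0. \<epsilon> \<le> 1 \<and>
           (\<forall>x0\<in>closure (poly_set l b m). \<exists>q\<in>{1..p}. \<exists>\<theta>\<in>{-1, 1::real}.
              \<forall>x\<in>ball x0 r \<inter> poly_set l b m. \<forall>t\<in>{0..\<epsilon>}.
                 x + (t * \<theta>) *\<^sub>R e q \<in> poly_set l b m)"
proof -
  define P where "P = poly_set l b m"
  have lin: "\<And>j. j \<in> {1..m} \<Longrightarrow> linear (l j)" using assms(2) by blast
  have cont: "\<And>j. j \<in> {1..m} \<Longrightarrow> continuous_on UNIV (l j)"
    using lin linear_continuous_on lin_bl by blast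
  have Peq: "P = (\<Inter>j\<in>{1..m}. {x. b j < l j x})"
    unfolding P_def poly_set_def by auto
  have openP: "open P"
    unfolding Peq
    by (intro open_INT finite_atLeastAtMost ballI open_Collect_less continuous_on_const cont) auto
  have closed_sup: "closed (\<Inter>j\<in>{1..m}. {x. b j \<le> l j x})"
    by (intro closed_INT ballI closed_Collect_le continuous_on_const cont) auto
  have clos: "closure P \<subseteq> (\<Inter>j\<in>{1..m}. {x. b j \<le> l j x})"
    by (rule closure_minimal[OF _ closed_sup]) (auto simp: Peq less_imp_le)
  have Pne: "P \<noteq> {}" using assms(3) P_def by simp
  have PnU: "P \<noteq> UNIV" using assms(4) P_def not_bounded_UNIV by metis
  have frne: "frontier P \<noteq> {}" using frontier_not_empty[OF Pne PnU] .
  have WI: "\<forall>x0\<in>frontier P. \<exists>\<epsilon>>0. \<exists>\<theta>\<in>{-1, 1::real}. \<exists>e'\<in>e ` {1..p}.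
        \<forall>t\<in>{0<..\<epsilon>}. cnt l b m (x0 + (\<theta> * t) *\<^sub>R e') < cnt l b m x0"
    using assms(5) unfolding weakly_incoming_def P_def .
  have pne: "{1..p} \<noteq> {}"
  proof -
    obtain x0 where "x0 \<in> frontier P" using frne by blast
    then show ?thesis using WI by blast
  qed
  have dir: "\<exists>q\<in>{1..p}. \<exists>\<theta>\<in>{-1,1::real}. \<forall>i\<in>{1..m}. l i y = b i \<longrightarrow> 0 \<le> l i (\<theta> *\<^sub>R e q)"
    if y: "y \<in> closure P" for y
  proof (cases "y \<in> P")
    case True
    then have "\<forall>i\<in>{1..m}. l i y \<noteq> b i" unfolding Peq by auto
    then show ?thesis using pne by auto
  next
    case False
    then have "y \<in> frontier P" using y openP frontier_def interior_open by auto
    then obtain \<epsilon> \<theta> e' where ep: "\<epsilon> > 0" and th: "\<theta> \<in> {-1,1::real}" and e': "e' \<in> e ` {1..p}"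
      and H: "\<forall>t\<in>{0<..\<epsilon>}. cnt l b m (y + (\<theta> * t) *\<^sub>R e') < cnt l b m y"
      using WI by blast
    obtain q where q: "q \<in> {1..p}" "e' = e q" using e' by blast
    have "cnt l b m (y + (\<theta> * \<epsilon>) *\<^sub>R e') < cnt l b m y" using H ep by auto
    then have "cnt l b m (y + (\<theta> * \<epsilon>) *\<^sub>R e') \<noteq> \<infinity>" using not_infinity_eq by (metis enat_ord_simps(6))
    then have "y + (\<theta> * \<epsilon>) *\<^sub>R e' \<in> closure P" unfolding cnt_def P_def using closure_subset by (auto split: if_splits)
    then have ge: "\<forall>i\<in>{1..m}. b i \<le> l i (y + (\<theta> * \<epsilon>) *\<^sub>R e')" using clos by blast
    have "\<forall>i\<in>{1..m}. l i y = b i \<longrightarrow> 0 \<le> l i (\<theta> *\<^sub>R e q)"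
    proof (intro ballI impI)
      fix i assume i: "i \<in> {1..m}" and eq: "l i y = b i"
      have "b i \<le> l i y + \<epsilon> * (\<theta> * l i e')"
        proof -
          have "l i (y + (\<theta> * \<epsilon>) *\<^sub>R e') = l i y + (\<theta> * \<epsilon>) * l i e'"
            using linear_add[OF lin[OF i]] linear_cmul[OF lin[OF i]] by simp
          moreover have "(\<theta> * \<epsilon>) * l i e' = \<epsilon> * (\<theta> * l i e')" by (simp only: ac_simps)
          ultimately show ?thesis using ge[rule_format, OF i] by simp
        qed
      then have "0 \<le> \<epsilon> * (\<theta> * l i e')" using eq by simp
      then have "0 \<le> \<theta> * l i e'" using ep by (simp add: zero_le_mult_iff)
      then show "0 \<le> l i (\<theta> *\<^sub>R e q)" using q linear_cmul[OF lin[OF i]] by simp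
    qed
    then show ?thesis using q th by blast
  qed
  have loc: "\<exists>\<rho>>0. \<exists>\<epsilon>>0. \<forall>x\<in>ball y \<rho> \<inter> P. \<forall>t\<in>{0..\<epsilon>}. x + t *\<^sub>R v \<in> P"
    if y: "y \<in> closure P" and v: "\<forall>i\<in>{1..m}. l i y = b i \<longrightarrow> 0 \<le> l i v" for y v
  proof -
    have ev: "\<forall>\<^sub>F z in nhds (y, 0::real). \<forall>j\<in>{1..m}. l j v < 0 \<longrightarrow> b j < l j (fst z) + snd z * l j v"
    proof (rule eventually_ball_finite, simp, intro ballI)
      fix j assume j: "j \<in> {1..m}"
      show "\<forall>\<^sub>F z in nhds (y, 0::real). l j v < 0 \<longrightarrow> b j < l j (fst z) + snd z * l j v"
      proof (cases "l j v < 0")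
        case True
        then have "l j y \<noteq> b j" using v j by force
        moreover have "b j \<le> l j y" using y clos j by blast
        ultimately have lt: "b j < l j y + 0 * l j v" by simp
        have "((\<lambda>z. l j (fst z) + snd z * l j v) \<longlongrightarrow> l j y + 0 * l j v) (nhds (y, 0::real))"
          by (intro tendsto_add tendsto_mult tendsto_const bounded_linear.tendsto[OF lin_bl[OF lin[OF j]]])
             (use tendsto_fst[OF filterlim_ident, of "(y,0::real)"] tendsto_snd[OF filterlim_ident, of "(y,0::real)"] in auto)
        from order_tendstoD(1)[OF this lt] show ?thesis by (rule eventually_mono) simp
      qed simp
    qed
    then obtain d where d: "d > 0" and dH: "\<forall>z. dist z (y, 0::real) < d \<longrightarrow>
        (\<forall>j\<in>{1..m}. l j v < 0 \<longrightarrow> b j < l j (fst z) + snd z * l j v)"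
      unfolding eventually_nhds_metric by blast
    show ?thesis
    proof (intro exI[of _ "d/2"] conjI ballI)
      fix x t assume x: "x \<in> ball y (d/2) \<inter> P" and t: "t \<in> {0..d/2}"
      have dxy: "dist x y < d/2" using x by (simp add: dist_commute)
      have "dist (x, t) (y, 0::real) < d"
      proof -
        have "dist (x, t) (y, 0::real) = sqrt ((dist x y)^2 + (dist t 0)^2)" by (simp add: dist_Pair_Pair)
        also have "\<dots> \<le> dist x y + dist t 0" by (rule order_trans[OF sqrt_sum_squares_le_sum_abs]) simp
        also have "\<dots> < d" using dxy t by auto
        finally show ?thesis .
      qed
      then have H: "\<forall>j\<in>{1..m}. l j v < 0 \<longrightarrow> b j < l j x + t * l j v" using dH by auto
      have xP: "\<forall>j\<in>{1..m}. b j < l j x" using x unfolding Peq by auto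
      show "x + t *\<^sub>R v \<in> P"
        unfolding Peq
      proof (intro INT_I CollectI)
        fix j assume j: "j \<in> {1..m}"
        have eq: "l j (x + t *\<^sub>R v) = l j x + t * l j v"
          using linear_add[OF lin[OF j]] linear_cmul[OF lin[OF j]] by simp
        show "b j < l j (x + t *\<^sub>R v)"
        proof (cases "l j v < 0")
          case True then show ?thesis using H j eq by auto
        next
          case False then have "0 \<le> t * l j v" using t by simp
          then show ?thesis using xP j eq by (smt (verit) atLeastAtMost_iff)
        qed
      qed
    qed (use d in auto)
  qed
  define V where "V n = {x0. \<exists>q\<in>{1..p}. \<exists>\<theta>\<in>{-1,1::real}. \<forall>x\<in>ball x0 (1/real (Suc n)) \<inter> P.
      \<forall>t\<in>{0..1/real (Suc n)}. x + (t * \<theta>) *\<^sub>R e q \<in> P}" for n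
  have Vmono: "V n \<subseteq> V N" if "n \<le> N" for n N
  proof
    fix x0 assume "x0 \<in> V n"
    then obtain q \<theta> where q: "q \<in> {1..p}" "\<theta> \<in> {-1,1::real}" and
      H: "\<forall>x\<in>ball x0 (1/real (Suc n)) \<inter> P. \<forall>t\<in>{0..1/real (Suc n)}. x + (t * \<theta>) *\<^sub>R e q \<in> P"
      unfolding V_def by blast
    have le: "1/real (Suc N) \<le> 1/real (Suc n)" using that by (simp add: frac_le)
    have "\<forall>x\<in>ball x0 (1/real (Suc N)) \<inter> P. \<forall>t\<in>{0..1/real (Suc N)}. x + (t * \<theta>) *\<^sub>R e q \<in> P"
      using H le by (auto simp: subset_iff)
    then show "x0 \<in> V N" unfolding V_def using q by blast
  qed
  have cover: "closure P \<subseteq> (\<Union>n. interior (V n))"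
  proof
    fix y assume y: "y \<in> closure P"
    obtain q \<theta> where q: "q \<in> {1..p}" "\<theta> \<in> {-1,1::real}" and
      v: "\<forall>i\<in>{1..m}. l i y = b i \<longrightarrow> 0 \<le> l i (\<theta> *\<^sub>R e q)" using dir[OF y] by blast
    obtain \<rho> \<epsilon> where r: "\<rho> > 0" "\<epsilon> > 0" and
      H: "\<forall>x\<in>ball y \<rho> \<inter> P. \<forall>t\<in>{0..\<epsilon>}. x + t *\<^sub>R (\<theta> *\<^sub>R e q) \<in> P"
      using loc[OF y v] by blast
    obtain n where n: "1 / real (Suc n) < min (\<rho>/2) \<epsilon>"
    proof -
      have "0 < min (\<rho>/2) \<epsilon>" using r by simp
      from reals_Archimedean[OF this] obtain n where "inverse (real (Suc n)) < min (\<rho>/2) \<epsilon>" by blast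
      then show ?thesis using that by (simp only: inverse_eq_divide)
    qed
    have "ball y (1/real (Suc n)) \<subseteq> V n"
    proof
      fix z assume z: "z \<in> ball y (1/real (Suc n))"
      have "\<forall>x\<in>ball z (1/real (Suc n)) \<inter> P. \<forall>t\<in>{0..1/real (Suc n)}. x + (t * \<theta>) *\<^sub>R e q \<in> P"
      proof (intro ballI)
        fix x t assume x: "x \<in> ball z (1/real (Suc n)) \<inter> P" and t: "t \<in> {0..1/real (Suc n)}"
        have "dist y x \<le> dist y z + dist z x" by (rule dist_triangle)
        moreover have "dist y z < \<rho>/2" using z n by simp
        moreover have "dist z x < \<rho>/2" using x n by simp
        ultimately have "dist y x < \<rho>" by linarith
        then have "x \<in> ball y \<rho>" by simp
        moreover have "t \<in> {0..\<epsilon>}" using t n by auto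
        ultimately have "x + t *\<^sub>R (\<theta> *\<^sub>R e q) \<in> P" using H x by blast
        then show "x + (t * \<theta>) *\<^sub>R e q \<in> P" by simp
      qed
      then show "z \<in> V n" unfolding V_def using q by blast
    qed
    then have "y \<in> interior (V n)"
      using interior_maximal[OF _ open_ball] by (metis centre_in_ball of_nat_0_less_iff zero_less_Suc zero_less_divide_1_iff subsetD)
    then show "y \<in> (\<Union>n. interior (V n))" by blast
  qed
  have cpt: "compact (closure P)" using assms(4) P_def compact_closure by blast
  obtain C' where C': "finite C'" "closure P \<subseteq> (\<Union>n\<in>C'. interior (V n))"
    using compactE_image[OF cpt, of UNIV "\<lambda>n. interior (V n)"] cover by (metis open_interior)
  define N where "N = Max (insert 0 C')"
  have allN: "closure P \<subseteq> V N"
  proof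
    fix x assume "x \<in> closure P"
    then obtain n where "n \<in> C'" "x \<in> interior (V n)" using C' by blast
    then have "x \<in> V n" using interior_subset by blast
    moreover have "n \<le> N" unfolding N_def using C' \<open>n \<in> C'\<close> by simp
    ultimately show "x \<in> V N" using Vmono by blast
  qed
  show ?thesis
  proof (intro exI[of _ "1/real (Suc N)"] conjI ballI)
    fix x0 assume "x0 \<in> closure (poly_set l b m)"
    then have "x0 \<in> V N" using allN P_def by blast
    then show "\<exists>q\<in>{1..p}. \<exists>\<theta>\<in>{-1, 1::real}.
              \<forall>x\<in>ball x0 (1/real (Suc N)) \<inter> poly_set l b m. \<forall>t\<in>{0..1/real (Suc N)}.
                 x + (t * \<theta>) *\<^sub>R e q \<in> poly_set l b m"
      unfolding V_def P_def by blast
  qed auto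
qed

end
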